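(* Let $G_n$, $T$ and $\gamma$ be as in the context, and let $C$ be a directed cycle in $T$, with $|C|$ its number of arcs. Then $|C|$ divides $n+1$. Moreover, for every vertex $u$ of $C$, $u\gamma(u)=l(C)^{\frac{n+1}{|C|}}$, where $l(C)$ is the label of $C$ traversed as a closed walk starting at the out-neighbour of $u$ in $C$ (so that its last arc is the arc of $C$ leaving $u$), and $l(C)^j$ denotes the concatenation of $j$ copies of $l(C)$.
   Context: Let $A$ be a finite alphabet with a linear order $<$, extended to the lexicographic order on words. Let $\mathcal{F}$ be a set of words over $A$ (forbidden words). A word $w$ is in the language if the bi-infinite periodic sequence $\cdots www\cdots$ contains no element of $\mathcal{F}$ as a factor; $W_k$ denotes the set of words of length $k$ in the language. Fix $n\geq 1$ and consider the digraph with vertex set $A^n$ and arcs $(as,sb)$ for $a,b\in A$, $s\in A^{n-1}$, $asb\in W_{n+1}$, the label of $(as,sb)$ being $b$. The de Bruijn graph of span $n$, $G_n$, is a strongly connected component of maximum size of this digraph; vertices are identified with their words (so $u\gamma(u)$ is a word of length $n+1$). The label of a walk is the concatenation of the labels of its arcs. Let $m$ be the vertex of $G_n$ whose word is lexicographically largest. For each vertex $v$, let $e(v)$ be the arc of $G_n$ with tail $v$ having maximum label, and let $\gamma(v)$ be the label of $e(v)$. $T$ is the spanning subgraph of $G_n$ with arc set $\{e(v): v\in V(G_n), v\neq m\}$. *)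

theory Defs
  imports Main "HOL-Library.List_Lexorder"
begin

text \<open>Words are lists over a finite linearly ordered alphabet 'a; the order on
  lists is the lexicographic order from HOL-Library.List_Lexorder.\<close>

text \<open>f is a factor of the bi-infinite periodic sequence ... w w w ... (w nonempty).\<close>
definition periodic_factor :: "'a list \<Rightarrow> 'a list \<Rightarrow> bool" where
  "periodic_factor f w \<longleftrightarrow>
     (\<exists>i. f = map (\<lambda>j. w ! ((i + j) mod length w)) [0..<length f])"

definition in_lang :: "'a list set \<Rightarrow> 'a list \<Rightarrow> bool" where
  "in_lang F w \<longleftrightarrow> w \<noteq> [] \<and> (\<forall>f\<in>F. \<not> periodic_factor f w)"

definition W :: "'a list set \<Rightarrow> nat \<Rightarrow> 'a list set" where
  "W F k = {w. length w = k \<and> in_lang F w}"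

text \<open>Arcs of the full digraph on A^n: (as, sb) with asb in W_(n+1); label b = last of target.\<close>
definition garc :: "'a list set \<Rightarrow> nat \<Rightarrow> 'a list \<Rightarrow> 'a list \<Rightarrow> bool" where
  "garc F n u v \<longleftrightarrow> length u = n \<and> (\<exists>b. v = tl u @ [b] \<and> u @ [b] \<in> W F (n + 1))"

definition is_scc :: "'a list set \<Rightarrow> nat \<Rightarrow> 'a list set \<Rightarrow> bool" where
  "is_scc F n V \<longleftrightarrow> (\<exists>u. length u = n \<and>
     V = {v. length v = n \<and> (garc F n)\<^sup>*\<^sup>* u v \<and> (garc F n)\<^sup>*\<^sup>* v u})"

definition is_deBruijn :: "'a list set \<Rightarrow> nat \<Rightarrow> 'a list set \<Rightarrow> bool" where
  "is_deBruijn F n V \<longleftrightarrow> is_scc F n V \<and> (\<forall>V'. is_scc F n V' \<longrightarrow> card V' \<le> card V)"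

definition Garc :: "'a list set \<Rightarrow> nat \<Rightarrow> 'a list set \<Rightarrow> 'a list \<Rightarrow> 'a list \<Rightarrow> bool" where
  "Garc F n V u v \<longleftrightarrow> u \<in> V \<and> v \<in> V \<and> garc F n u v"

definition gamma :: "'a list set \<Rightarrow> nat \<Rightarrow> 'a list set \<Rightarrow> 'a::linorder list \<Rightarrow> 'a" where
  "gamma F n V u = Max {b. Garc F n V u (tl u @ [b])}"

definition Tarc :: "'a list set \<Rightarrow> nat \<Rightarrow> 'a list set \<Rightarrow> 'a::linorder list \<Rightarrow> 'a list \<Rightarrow> bool" where
  "Tarc F n V u v \<longleftrightarrow> u \<in> V \<and> u \<noteq> Max V \<and> Garc F n V u v \<and> last v = gamma F n V u"

definition is_cycle :: "('b \<Rightarrow> 'b \<Rightarrow> bool) \<Rightarrow> 'b list \<Rightarrow> bool" where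
  "is_cycle R cs \<longleftrightarrow> cs \<noteq> [] \<and> distinct cs \<and>
     (\<forall>i<length cs. R (cs ! i) (cs ! ((i + 1) mod length cs)))"

end

theory Submission
  imports Defs
begin

lemma pf_rotate1:
  assumes "periodic_factor f (rotate1 x)" "x \<noteq> []"
  shows "periodic_factor f x"
proof -
  obtain i where i: "f = map (\<lambda>j. rotate1 x ! ((i + j) mod length (rotate1 x))) [0..<length f]"
    using assms(1) unfolding periodic_factor_def by blast
  have "\<And>j. rotate1 x ! ((i + j) mod length x) = x ! ((Suc i + j) mod length x)"
    using assms(2) by (simp add: nth_rotate1 mod_Suc_eq)
  then have "f = map (\<lambda>j. x ! ((Suc i + j) mod length x)) [0..<length f]"
    using i by simp
  then show ?thesis unfolding periodic_factor_def by blast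
qed

lemma W_rotate1: "x \<in> W F L \<Longrightarrow> rotate1 x \<in> W F L"
  unfolding W_def in_lang_def using pf_rotate1 by fastforce

lemma W_rotate: "x \<in> W F L \<Longrightarrow> rotate p x \<in> W F L"
  by (induction p) (auto intro: W_rotate1)

lemma rot_step:
  assumes "x \<in> W F (n+1)" "n \<ge> 1"
  shows "rotate p x = take n (rotate p x) @ [last (rotate p x)]
    \<and> take n (rotate (Suc p) x) = tl (take n (rotate p x)) @ [last (rotate p x)]
    \<and> garc F n (take n (rotate p x)) (take n (rotate (Suc p) x))"
proof -
  define r where "r = rotate p x"
  have lr: "length r = n + 1" using assms(1) unfolding r_def W_def by simp
  have rW: "r \<in> W F (n+1)" using W_rotate[OF assms(1)] r_def by simp
  have r_ne: "r \<noteq> []" using lr by auto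
  have e1: "r = take n r @ [last r]"
    using lr r_ne by (metis append_butlast_last_id butlast_conv_take diff_add_inverse2)
  have tne: "take n r \<noteq> []" using lr assms(2) by auto
  have e2: "take n (rotate1 r) = tl (take n r) @ [last r]"
  proof -
    have "rotate1 r = tl r @ [hd r]" using rotate1_hd_tl[OF r_ne] .
    then have "take n (rotate1 r) = tl r" using lr by simp
    also have "tl r = tl (take n r) @ [last r]"
      using e1 tne by (metis tl_append2)
    finally show ?thesis .
  qed
  have g: "garc F n (take n r) (take n (rotate1 r))"
  proof -
    have "length (take n r) = n" using lr by simp
    moreover have "take n r @ [last r] \<in> W F (n+1)" using e1 rW by simp
    ultimately show ?thesis unfolding garc_def using e2 by blast
  qed
  show ?thesis using e1 e2 g r_def by simp
qed

lemma rot_reach: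
  assumes "x \<in> W F (n+1)" "n \<ge> 1"
  shows "(garc F n)\<^sup>*\<^sup>* (take n (rotate p x)) (take n (rotate (p + d) x))"
proof (induction d)
  case 0 then show ?case by simp
next
  case (Suc d)
  then show ?case using rot_step[OF assms, of "p + d"]
    by (metis add_Suc_right rtranclp.rtrancl_into_rtrancl)
qed

lemma rot_reach_all:
  assumes "x \<in> W F (n+1)" "n \<ge> 1"
  shows "(garc F n)\<^sup>*\<^sup>* (take n (rotate p x)) (take n (rotate q x))"
proof -
  have lx: "length x = n + 1" using assms(1) unfolding W_def by simp
  have "rotate (p + (q + p * n)) x = rotate q x"
  proof -
    have "p + (q + p * n) = q + p * length x" using lx by (simp add: algebra_simps)
    then have "(p + (q + p * n)) mod length x = q mod length x"
      by (metis mod_mult_self1 mult.commute)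
    then show ?thesis by (metis rotate_conv_mod)
  qed
  then show ?thesis using rot_reach[OF assms, of p "q + p * n"] by simp
qed

lemma scc_closed:
  assumes "is_scc F n V" "w \<in> V" "length w' = n"
    "(garc F n)\<^sup>*\<^sup>* w w'" "(garc F n)\<^sup>*\<^sup>* w' w"
  shows "w' \<in> V"
  using assms unfolding is_scc_def by (auto intro: rtranclp_trans)

lemma rot_in_V:
  assumes "is_scc F n V" "x \<in> W F (n+1)" "n \<ge> 1" "take n x \<in> V"
  shows "take n (rotate p x) \<in> V"
proof -
  have lx: "length x = n + 1" using assms(2) unfolding W_def by simp
  show ?thesis
    using scc_closed[OF assms(1,4), of "take n (rotate p x)"]
      rot_reach_all[OF assms(2,3), of 0 p] rot_reach_all[OF assms(2,3), of p 0] lx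
    by simp
qed

lemma map_upt_split: "map f [0..<a+b] = map f [0..<a] @ map (\<lambda>j. f (a+j)) [0..<b]"
  by (induction b) auto

lemma map_periodic:
  assumes "\<And>j. f (j + k) = f j"
  shows "map f [0..<q*k] = concat (replicate q (map f [0..<k]))"
proof (induction q)
  case 0 then show ?case by simp
next
  case (Suc q)
  have "map f [0..<Suc q * k] = map f [0..<k] @ map (\<lambda>j. f (k+j)) [0..<q*k]"
    using map_upt_split[of f k "q*k"] by simp
  also have "map (\<lambda>j. f (k+j)) [0..<q*k] = map f [0..<q*k]"
    using assms by (simp add: add.commute)
  finally show ?case using Suc by simp
qed


theorem corollary1:
  fixes F :: "('a::{finite,linorder}) list set" and n :: nat
    and V :: "'a list set" and cs :: "'a list list"
  assumes "n \<ge> 1"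
    and "is_deBruijn F n V"
    and "is_cycle (Tarc F n V) cs"
  shows "length cs dvd n + 1 \<and>
    (\<forall>i<length cs.
       (cs ! i) @ [gamma F n V (cs ! i)] =
       concat (replicate ((n + 1) div length cs)
         (map (\<lambda>j. last (cs ! ((i + 2 + j) mod length cs))) [0..<length cs])))"
proof -
  define k where "k = length cs"
  define c where "c i = cs ! (i mod k)" for i
  define lab where "lab i = last (c i)" for i
  have scc: "is_scc F n V" using assms(2) unfolding is_deBruijn_def by simp
  have kpos: "k > 0" using assms(3) unfolding is_cycle_def k_def by simp
  have dist: "distinct cs" using assms(3) unfolding is_cycle_def by simp
  have cper: "c (i + m * k) = c i" for i m unfolding c_def by simp
  have lper: "lab (i + m * k) = lab i" for i m unfolding lab_def using cper by simp
  have arc: "Tarc F n V (c i) (c (Suc i))" for i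
  proof -
    have "Tarc F n V (cs ! (i mod k)) (cs ! ((i mod k + 1) mod k))"
      using assms(3) kpos unfolding is_cycle_def k_def by simp
    moreover have "(i mod k + 1) mod k = Suc i mod k" by (simp add: mod_Suc_eq)
    ultimately show ?thesis unfolding c_def by simp
  qed
  have inV: "c i \<in> V" for i using arc[of i] unfolding Tarc_def by simp
  have len: "length (c i) = n" for i using arc[of i] unfolding Tarc_def Garc_def garc_def by simp
  have gam: "gamma F n V (c i) = lab (Suc i)" for i
    using arc[of i] unfolding Tarc_def lab_def by simp
  have step: "c (Suc i) = tl (c i) @ [lab (Suc i)] \<and> c i @ [lab (Suc i)] \<in> W F (n+1)" for i
  proof -
    obtain b where b: "c (Suc i) = tl (c i) @ [b]" "c i @ [b] \<in> W F (n+1)"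
      using arc[of i] unfolding Tarc_def Garc_def garc_def by blast
    then have "lab (Suc i) = b" unfolding lab_def by simp
    then show ?thesis using b by simp
  qed
  have win0: "c (i + m) = drop m (c i) @ map (\<lambda>j. lab (i + 1 + j)) [0..<m]" if "m \<le> n" for i m
    using that
  proof (induction m)
    case 0 then show ?case by simp
  next
    case (Suc m)
    have ne: "drop m (c i) \<noteq> []" using Suc.prems len[of i] by simp
    have "c (i + Suc m) = tl (c (i + m)) @ [lab (Suc (i + m))]" using step[of "i+m"] by simp
    also have "\<dots> = tl (drop m (c i)) @ map (\<lambda>j. lab (i + 1 + j)) [0..<m] @ [lab (Suc (i + m))]"
      using Suc ne by simp
    also have "\<dots> = drop (Suc m) (c i) @ map (\<lambda>j. lab (i + 1 + j)) [0..<Suc m]"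
      by (simp add: drop_Suc tl_drop)
    finally show ?case .
  qed
  have win: "c (i + n) = map (\<lambda>j. lab (i + 1 + j)) [0..<n]" for i
    using win0[of n i] len[of i] by simp
  have hdwin: "hd (c (i + n)) = lab (Suc i)" for i
    using win[of i] assms(1) by (simp add: hd_map)
  have ineq1: "hd (c t) \<le> lab (Suc (Suc t))" for t
  proof -
    define x where "x = c t @ [lab (Suc t)]"
    have xW: "x \<in> W F (n+1)" using step[of t] x_def by simp
    have tx: "take n x = c t" using len[of t] x_def by simp
    have cne: "c t \<noteq> []" using len[of t] assms(1) by auto
    have y1: "take n (rotate 1 x) = c (Suc t)"
      using rot_step[OF xW assms(1), of 0] tx step[of t] x_def by simp
    have lr: "last (rotate 1 x) = hd (c t)"
      using cne x_def by (cases "c t") auto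
    have g: "garc F n (c (Suc t)) (tl (c (Suc t)) @ [hd (c t)])"
    proof -
      have r: "take n (rotate (Suc 1) x) = tl (take n (rotate 1 x)) @ [last (rotate 1 x)] \<and>
        garc F n (take n (rotate 1 x)) (take n (rotate (Suc 1) x))"
        using rot_step[OF xW assms(1), of 1] by blast
      show ?thesis using r unfolding y1 lr by metis
    qed
    have v2: "take n (rotate 2 x) \<in> V"
      using rot_in_V[OF scc xW assms(1)] tx inV[of t] by simp
    have "take n (rotate (Suc 1) x) = tl (c (Suc t)) @ [hd (c t)]"
    proof -
      have r: "take n (rotate (Suc 1) x) = tl (take n (rotate 1 x)) @ [last (rotate 1 x)]"
        using rot_step[OF xW assms(1), of 1] by blast
      show ?thesis using r unfolding y1 lr .
    qed
    then have "take n (rotate 2 x) = tl (c (Suc t)) @ [hd (c t)]" by (simp add: numeral_2_eq_2)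
    then have "Garc F n V (c (Suc t)) (tl (c (Suc t)) @ [hd (c t)])"
      unfolding Garc_def using g v2 inV by simp
    then have "hd (c t) \<in> {b. Garc F n V (c (Suc t)) (tl (c (Suc t)) @ [b])}" by simp
    then have "hd (c t) \<le> gamma F n V (c (Suc t))"
      unfolding gamma_def by (simp add: Max_ge)
    then show ?thesis using gam by simp
  qed
  have ineq: "lab s \<le> lab (s + (n + 1))" for s
  proof -
    have "lab (s + k) \<le> lab (s + k + (n+1))"
    proof -
      obtain t where t: "s + k = Suc t" using kpos by (metis add_gr_0 not0_implies_Suc gr0_implies_Suc)
      have "lab (Suc t) = hd (c (t + n))" using hdwin by simp
      also have "\<dots> \<le> lab (Suc (Suc (t + n)))" by (rule ineq1)
      finally show ?thesis using t by simp
    qed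
    then show ?thesis using lper[of s 1] lper[of "s + (n+1)" 1] by (simp add: algebra_simps)
  qed
  have ineqm: "lab s \<le> lab (s + m * (n + 1))" for s m
  proof (induction m)
    case 0 then show ?case by simp
  next
    case (Suc m)
    then show ?case using ineq[of "s + m * (n+1)"] by (simp add: algebra_simps)
  qed
  have lperN: "lab (s + (n + 1)) = lab s" for s
  proof (rule antisym)
    show "lab s \<le> lab (s + (n + 1))" by (rule ineq)
    have "lab (s + (n + 1)) \<le> lab (s + (n + 1) + (k - 1) * (n + 1))" by (rule ineqm)
    also have "s + (n + 1) + (k - 1) * (n + 1) = s + (n + 1) * k"
      using kpos by (cases k) (auto simp: algebra_simps)
    also have "lab \<dots> = lab s" using lper[of s "n+1"] by (simp add: mult.commute)
    finally show "lab (s + (n + 1)) \<le> lab s" .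
  qed
  have nk: "n \<le> n * k" using kpos by simp
  have cperN: "c (i + (n + 1)) = c i" for i
  proof -
    have "c (i + (n+1)) = c (i + (n+1) + n * k)" using cper[of "i + (n+1)" n] by simp
    also have "i + (n+1) + n * k = (i + 1 + n*k) + n" by simp
    also have "c \<dots> = map (\<lambda>j. lab (i + 1 + n*k + 1 + j)) [0..<n]" by (rule win)
    also have "\<dots> = map (\<lambda>j. lab (i + (n*k - n) + 1 + j)) [0..<n]"
    proof -
      have "lab (i + 1 + n*k + 1 + j) = lab (i + (n*k - n) + 1 + j)" for j
      proof -
        have "i + 1 + n*k + 1 + j = (i + (n*k - n) + 1 + j) + (n + 1)" using nk by linarith
        then show ?thesis using lperN[of "i + (n*k - n) + 1 + j"] by (simp only:)
      qed
      then show ?thesis by simp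
    qed
    also have "\<dots> = c (i + (n*k - n) + n)" using win by simp
    also have "i + (n*k - n) + n = i + n * k"
      using nk by linarith
    also have "c \<dots> = c i" using cper[of i n] by simp
    finally show ?thesis .
  qed
  have dvd: "k dvd n + 1"
  proof -
    have "cs ! ((n+1) mod k) = cs ! (0 mod k)" using cperN[of 0] unfolding c_def by simp
    then have "(n+1) mod k = 0 mod k"
      using dist kpos nth_eq_iff_index_eq unfolding k_def by (metis mod_less_divisor)
    then show ?thesis by (simp add: mod_eq_0_iff_dvd)
  qed
  have main: "cs ! i @ [gamma F n V (cs ! i)] =
       concat (replicate ((n + 1) div k)
         (map (\<lambda>j. last (cs ! ((i + 2 + j) mod k))) [0..<k]))" if "i < k" for i
  proof -
    have ci: "cs ! i = c i" unfolding c_def using that by simp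
    have "c i = c (i + 1 + n)" using cperN[of i] by (simp add: algebra_simps)
    also have "\<dots> = map (\<lambda>j. lab (i + 2 + j)) [0..<n]" using win[of "i+1"] by simp
    finally have e: "c i = map (\<lambda>j. lab (i + 2 + j)) [0..<n]" .
    have "lab (Suc i) = lab (i + 2 + n)" using lperN[of "Suc i"] by (simp add: algebra_simps)
    then have "c i @ [gamma F n V (c i)] = map (\<lambda>j. lab (i + 2 + j)) [0..<n+1]"
      unfolding gam by (subst e) simp
    also have "n + 1 = ((n+1) div k) * k" using dvd by simp
    also have "map (\<lambda>j. lab (i + 2 + j)) [0..<((n+1) div k) * k]
        = concat (replicate ((n + 1) div k) (map (\<lambda>j. lab (i + 2 + j)) [0..<k]))"
    proof (rule map_periodic)
      fix j show "lab (i + 2 + (j + k)) = lab (i + 2 + j)"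
        using lper[of "i + 2 + j" 1] by (simp add: add.assoc)
    qed
    also have "map (\<lambda>j. lab (i + 2 + j)) [0..<k] = map (\<lambda>j. last (cs ! ((i + 2 + j) mod k))) [0..<k]"
      unfolding lab_def c_def by simp
    finally show ?thesis using ci by simp
  qed
  show ?thesis using dvd main unfolding k_def by simp
qed

end
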